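(* Let $\epsilon>0$ and let $u^1,u^2$ be smooth functions on $[0,1]^2$; denote also by $u^1,u^2$ their restrictions to the grid $(x_i,y_j)=(i\Delta x,j\Delta y)$, $i=0,\dots,N-1$, $j=0,\dots,M-1$, $(N-1)\Delta x=(M-1)\Delta y=1$. Let $D_x=P_x^{-1}Q_x$, $D_y=P_y^{-1}Q_y$ be summation-by-parts operators with $P_x=\Delta x\,\mathrm{diag}(p^x_0,\dots,p^x_{N-1})$, $P_y=\Delta y\,\mathrm{diag}(p^y_0,\dots,p^y_{M-1})$, positive entries, $Q_x+Q_x^T=R_N-L_N$, $Q_y+Q_y^T=R_M-L_M$; assume moreover that for every smooth $\bar u$ with grid restriction $u$ and every grid function $w$, $\|D_x(u\circ w)-u\circ D_xw\|_{P_x}\le C_0\|\partial_x\bar u\|_{L^\infty}\|w\|_{P_x}$ (and analogously in $y$), with $C_0$ independent of the grid. Let $\mathbf V(t)=(V^1,V^2)$ solve the semi-discrete scheme with mixed boundary treatment and homogeneous data ($\mathbf g=\mathbf h=0$): $$ \mathbf V_t+u^1\circ\mathfrak{d}_x\mathbf V+u^2\circ\mathfrak{d}_y\mathbf V-C\mathbf V+\epsilon\,\mathfrak{curl}^2(\mathbf V)=\mathcal B\mathbf V+\epsilon\begin{pmatrix}(\mathcal U-\mathcal D)(I_N\otimes P_y^{-1})\,\mathfrak{curl}(\mathbf V)\\ -(\mathcal R-\mathcal L)(P_x^{-1}\otimes I_M)\,\mathfrak{curl}(\mathbf V)\end{pmatrix},\quad t>0, $$ where $C=\begin{pmatrix}-\mathfrak{d}_yu^2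 & \mathfrak{d}_yu^1\\ \mathfrak{d}_xu^2 & -\mathfrak{d}_xu^1\end{pmatrix}$ (entries acting by componentwise multiplication) and $\mathcal B=(P_x^{-1}\otimes I_M)(\Sigma_{\mathcal L}\mathcal L+\Sigma_{\mathcal R}\mathcal R)+(I_N\otimes P_y^{-1})(\Sigma_{\mathcal D}\mathcal D+\Sigma_{\mathcal U}\mathcal U)$ with diagonal penalty matrices (entries $(\sigma_{\mathcal K})_{i,j}$) chosen so that $$(\sigma_{\mathcal R})_{N-1,j}\le \tfrac{u^{1,-}(1,y_j)}{2},\quad (\sigma_{\mathcal L})_{0,j}\le-\tfrac{u^{1,+}(0,y_j)}{2},\quad (\sigma_{\mathcal U})_{i,M-1}\le\tfrac{u^{2,-}(x_i,1)}{2},\quad (\sigma_{\mathcal D})_{i,0}\le-\tfrac{u^{2,+}(x_i,0)}{2}.$$ Then $$\|\mathbf V(t)\|_{\mathbf P}^2+\epsilon\int_0^t e^{c(t-s)}\|\mathfrak{curl}(\mathbf V(s))\|_{\mathbf P}^2\,ds\le e^{ct}\|\mathbf V(0)\|_{\mathbf P}^2,$$ where $c$ is a constant depending on $\mathfrak{d}_x,\mathfrak{d}_y$ and the derivatives of $u^1,u^2$, but not on $N$ or $M$.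
   Context: $R_n=\mathrm{diag}(0,\dots,0,1)$, $L_n=\mathrm{diag}(1,0,\dots,0)$ ($n\times n$), $I_n$ identity, $\otimes$ Kronecker product. $\mathfrak{d}_x=D_x\otimes I_M$, $\mathfrak{d}_y=I_N\otimes D_y$, $\mathbf P=P_x\otimes P_y$, $\mathcal R=R_N\otimes I_M$, $\mathcal L=L_N\otimes I_M$, $\mathcal U=I_N\otimes R_M$, $\mathcal D=I_N\otimes L_M$. Grid functions are ordered as $(w_{0,0},w_{0,1},\dots,w_{0,M-1},w_{1,0},\dots,w_{N-1,M-1})^T$; $(u\circ w)_k=u_kw_k$; $\|w\|_{P_x}=(w^TP_xw)^{1/2}$. $(v,w)_{\mathbf P}=v^T\mathbf Pw$, $\|w\|_{\mathbf P}=(w,w)_{\mathbf P}^{1/2}$; for vector grid functions $(\mathbf V,\mathbf W)_{\mathbf P}=(V^1,W^1)_{\mathbf P}+(V^2,W^2)_{\mathbf P}$, and operators and $\mathcal B$ act componentwise. $\mathfrak{curl}(\mathbf V)=\mathfrak{d}_xV^2-\mathfrak{d}_yV^1$, $\mathfrak{curl}^2(\mathbf V)=(-\mathfrak{d}_{yy}V^1+\mathfrak{d}_{xy}V^2,\ \mathfrak{d}_{xy}V^1-\mathfrak{d}_{xx}V^2)$ with $\mathfrak{d}_{xy}=\mathfrak{d}_x\mathfrak{d}_y$, etc. $u^{l,+}=\max(u^l,0)$, $u^{l,-}=\min(u^l,0)$. *)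

theory Defs
  imports "HOL-Analysis.Analysis"
begin

definition smooth_on1 :: "real set \<Rightarrow> (real \<Rightarrow> real) \<Rightarrow> bool" where
  "smooth_on1 S f \<longleftrightarrow> (\<forall>k. \<forall>x\<in>S. ((deriv ^^ k) f) differentiable at x)"

definition smooth01 :: "(real \<Rightarrow> real) \<Rightarrow> bool" where
  "smooth01 f \<longleftrightarrow> (\<exists>S. open S \<and> {0..1} \<subseteq> S \<and> smooth_on1 S f)"

definition pdx :: "(real \<times> real \<Rightarrow> real) \<Rightarrow> real \<times> real \<Rightarrow> real" where
  "pdx f = (\<lambda>(x, y). deriv (\<lambda>s. f (s, y)) x)"

definition pdy :: "(real \<times> real \<Rightarrow> real) \<Rightarrow> real \<times> real \<Rightarrow> real" where
  "pdy f = (\<lambda>(x, y). deriv (\<lambda>s. f (x, s)) y)"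

text \<open>Iterated partial derivatives (True = d/dx, False = d/dy).\<close>
fun ipd :: "bool list \<Rightarrow> (real \<times> real \<Rightarrow> real) \<Rightarrow> real \<times> real \<Rightarrow> real" where
  "ipd [] f = f"
| "ipd (b # bs) f = (if b then pdx else pdy) (ipd bs f)"

definition smooth_on2 :: "(real \<times> real) set \<Rightarrow> (real \<times> real \<Rightarrow> real) \<Rightarrow> bool" where
  "smooth_on2 S f \<longleftrightarrow> (\<forall>bs. continuous_on S (ipd bs f) \<and>
      (\<forall>x y. (x, y) \<in> S \<longrightarrow> (\<lambda>s. ipd bs f (s, y)) differentiable at x
                              \<and> (\<lambda>s. ipd bs f (x, s)) differentiable at y))"

definition smooth_sq :: "(real \<times> real \<Rightarrow> real) \<Rightarrow> bool" where
  "smooth_sq f \<longleftrightarrow> (\<exists>S. open S \<and> {0..1} \<times> {0..1} \<subseteq> S \<and> smooth_on2 S f)"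

definition Linf01 :: "(real \<Rightarrow> real) \<Rightarrow> real" where
  "Linf01 g = Sup ((\<lambda>x. \<bar>g x\<bar>) ` {0..1})"

text \<open>Grid point x_i = i * Delta x with (N-1) Delta x = 1.\<close>
definition gx :: "nat \<Rightarrow> nat \<Rightarrow> real" where
  "gx N i = real i / real (N - 1)"

text \<open>Diagonal of P = Delta x * diag(p_0, ..., p_{N-1}).\<close>
definition Pdiag :: "nat \<Rightarrow> (nat \<Rightarrow> real) \<Rightarrow> nat \<Rightarrow> real" where
  "Pdiag N p i = p i / real (N - 1)"

text \<open>D = P^{-1} Q, with P diagonal given by its diagonal pd.\<close>
definition Dop :: "(nat \<Rightarrow> real) \<Rightarrow> (nat \<Rightarrow> nat \<Rightarrow> real) \<Rightarrow> nat \<Rightarrow> nat \<Rightarrow> real" where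
  "Dop pd Q i k = Q i k / pd i"

definition normP1 :: "nat \<Rightarrow> (nat \<Rightarrow> real) \<Rightarrow> (nat \<Rightarrow> real) \<Rightarrow> real" where
  "normP1 N pd w = sqrt (\<Sum>k<N. pd k * (w k)\<^sup>2)"

text \<open>SBP structure: positive p, and Q + Q^T = R_N - L_N (N x N).\<close>
definition SBP :: "nat \<Rightarrow> (nat \<Rightarrow> real) \<Rightarrow> (nat \<Rightarrow> nat \<Rightarrow> real) \<Rightarrow> bool" where
  "SBP N p Q \<longleftrightarrow> 2 \<le> N \<and> (\<forall>i<N. 0 < p i) \<and>
     (\<forall>i<N. \<forall>k<N. Q i k + Q k i =
        (if i = k \<and> i = N - 1 then 1 else 0) - (if i = k \<and> i = 0 then 1 else 0))"

definition commutator_bound :: "nat \<Rightarrow> (nat \<Rightarrow> real) \<Rightarrow> (nat \<Rightarrow> nat \<Rightarrow> real) \<Rightarrow> real \<Rightarrow> bool" where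
  "commutator_bound N p Q C0 \<longleftrightarrow>
     (\<forall>ub w. smooth01 ub \<longrightarrow>
        normP1 N (Pdiag N p)
          (\<lambda>k. (\<Sum>l<N. Dop (Pdiag N p) Q k l * (ub (gx N l) * w l))
               - ub (gx N k) * (\<Sum>l<N. Dop (Pdiag N p) Q k l * w l))
        \<le> C0 * Linf01 (deriv ub) * normP1 N (Pdiag N p) w)"

section \<open>Two-dimensional grid functions (w i j = w_{i,j}, i<N, j<M)\<close>

type_synonym grid = "nat \<Rightarrow> nat \<Rightarrow> real"

text \<open>d_x = D_x (x) I_M and d_y = I_N (x) D_y.\<close>
definition dx :: "nat \<Rightarrow> (nat \<Rightarrow> nat \<Rightarrow> real) \<Rightarrow> grid \<Rightarrow> grid" where
  "dx N Dx w = (\<lambda>i j. \<Sum>k<N. Dx i k * w k j)"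

definition dy :: "nat \<Rightarrow> (nat \<Rightarrow> nat \<Rightarrow> real) \<Rightarrow> grid \<Rightarrow> grid" where
  "dy M Dy w = (\<lambda>i j. \<Sum>l<M. Dy j l * w i l)"

text \<open>(v, w)_P with P = P_x (x) P_y.\<close>
definition ipP :: "nat \<Rightarrow> nat \<Rightarrow> (nat \<Rightarrow> real) \<Rightarrow> (nat \<Rightarrow> real) \<Rightarrow> grid \<Rightarrow> grid \<Rightarrow> real" where
  "ipP N M px py v w = (\<Sum>i<N. \<Sum>j<M. px i * py j * v i j * w i j)"

definition ug :: "nat \<Rightarrow> nat \<Rightarrow> (real \<times> real \<Rightarrow> real) \<Rightarrow> grid" where
  "ug N M u = (\<lambda>i j. u (gx N i, gx M j))"

definition curlg :: "nat \<Rightarrow> nat \<Rightarrow> (nat \<Rightarrow> nat \<Rightarrow> real) \<Rightarrow> (nat \<Rightarrow> nat \<Rightarrow> real) \<Rightarrow> grid \<Rightarrow> grid \<Rightarrow> grid" where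
  "curlg N M Dx Dy w1 w2 = (\<lambda>i j. dx N Dx w2 i j - dy M Dy w1 i j)"

definition ind :: "bool \<Rightarrow> real" where
  "ind b = (if b then 1 else 0)"

text \<open>B = (P_x^{-1} (x) I)(Sigma_L L + Sigma_R R) + (I (x) P_y^{-1})(Sigma_D D + Sigma_U U), applied to one component.\<close>
definition Bop :: "nat \<Rightarrow> nat \<Rightarrow> (nat \<Rightarrow> real) \<Rightarrow> (nat \<Rightarrow> real) \<Rightarrow> grid \<Rightarrow> grid \<Rightarrow> grid \<Rightarrow> grid \<Rightarrow> grid \<Rightarrow> grid" where
  "Bop N M px py sL sR sD sU w = (\<lambda>i j.
      (sL i j * ind (i = 0) * w i j + sR i j * ind (i = N - 1) * w i j) / px i
    + (sD i j * ind (j = 0) * w i j + sU i j * ind (j = M - 1) * w i j) / py j)"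

definition rhs1 :: "real \<Rightarrow> nat \<Rightarrow> nat \<Rightarrow> (nat \<Rightarrow> real) \<Rightarrow> (nat \<Rightarrow> real) \<Rightarrow>
    (nat \<Rightarrow> nat \<Rightarrow> real) \<Rightarrow> (nat \<Rightarrow> nat \<Rightarrow> real) \<Rightarrow> grid \<Rightarrow> grid \<Rightarrow>
    grid \<Rightarrow> grid \<Rightarrow> grid \<Rightarrow> grid \<Rightarrow> grid \<Rightarrow> grid \<Rightarrow> grid" where
  "rhs1 eps N M px py Dx Dy U1 U2 sL sR sD sU w1 w2 = (\<lambda>i j.
      - U1 i j * dx N Dx w1 i j - U2 i j * dy M Dy w1 i j
      + (- dy M Dy U2 i j * w1 i j + dy M Dy U1 i j * w2 i j)
      - eps * (- dy M Dy (dy M Dy w1) i j + dx N Dx (dy M Dy w2) i j)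
      + Bop N M px py sL sR sD sU w1 i j
      + eps * ((ind (j = M - 1) - ind (j = 0)) * curlg N M Dx Dy w1 w2 i j / py j))"

definition rhs2 :: "real \<Rightarrow> nat \<Rightarrow> nat \<Rightarrow> (nat \<Rightarrow> real) \<Rightarrow> (nat \<Rightarrow> real) \<Rightarrow>
    (nat \<Rightarrow> nat \<Rightarrow> real) \<Rightarrow> (nat \<Rightarrow> nat \<Rightarrow> real) \<Rightarrow> grid \<Rightarrow> grid \<Rightarrow>
    grid \<Rightarrow> grid \<Rightarrow> grid \<Rightarrow> grid \<Rightarrow> grid \<Rightarrow> grid \<Rightarrow> grid" where
  "rhs2 eps N M px py Dx Dy U1 U2 sL sR sD sU w1 w2 = (\<lambda>i j.
      - U1 i j * dx N Dx w2 i j - U2 i j * dy M Dy w2 i j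
      + (dx N Dx U2 i j * w1 i j - dx N Dx U1 i j * w2 i j)
      - eps * (dx N Dx (dy M Dy w1) i j - dx N Dx (dx N Dx w2) i j)
      + Bop N M px py sL sR sD sU w2 i j
      - eps * ((ind (i = N - 1) - ind (i = 0)) * curlg N M Dx Dy w1 w2 i j / px i))"

definition solves :: "real \<Rightarrow> nat \<Rightarrow> nat \<Rightarrow> (nat \<Rightarrow> real) \<Rightarrow> (nat \<Rightarrow> real) \<Rightarrow>
    (nat \<Rightarrow> nat \<Rightarrow> real) \<Rightarrow> (nat \<Rightarrow> nat \<Rightarrow> real) \<Rightarrow> grid \<Rightarrow> grid \<Rightarrow>
    grid \<Rightarrow> grid \<Rightarrow> grid \<Rightarrow> grid \<Rightarrow> (real \<Rightarrow> grid) \<Rightarrow> (real \<Rightarrow> grid) \<Rightarrow> bool" where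
  "solves eps N M px py Dx Dy U1 U2 sL sR sD sU V1 V2 \<longleftrightarrow>
     (\<forall>i<N. \<forall>j<M.
        continuous_on {0..} (\<lambda>t. V1 t i j) \<and> continuous_on {0..} (\<lambda>t. V2 t i j) \<and>
        (\<forall>t>0. ((\<lambda>s. V1 s i j) has_real_derivative
                   rhs1 eps N M px py Dx Dy U1 U2 sL sR sD sU (V1 t) (V2 t) i j) (at t)
              \<and> ((\<lambda>s. V2 s i j) has_real_derivative
                   rhs2 eps N M px py Dx Dy U1 U2 sL sR sD sU (V1 t) (V2 t) i j) (at t)))"

definition penalty_ok :: "nat \<Rightarrow> nat \<Rightarrow> (real \<times> real \<Rightarrow> real) \<Rightarrow> (real \<times> real \<Rightarrow> real) \<Rightarrow>
    grid \<Rightarrow> grid \<Rightarrow> grid \<Rightarrow> grid \<Rightarrow> bool" where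
  "penalty_ok N M u1 u2 sL sR sD sU \<longleftrightarrow>
     (\<forall>j<M. sR (N - 1) j \<le> min (u1 (1, gx M j)) 0 / 2
           \<and> sL 0 j \<le> - max (u1 (0, gx M j)) 0 / 2) \<and>
     (\<forall>i<N. sU i (M - 1) \<le> min (u2 (gx N i, 1)) 0 / 2
           \<and> sD i 0 \<le> - max (u2 (gx N i, 0)) 0 / 2)"

definition dmax :: "nat \<Rightarrow> nat \<Rightarrow> (nat \<Rightarrow> nat \<Rightarrow> real) \<Rightarrow> (nat \<Rightarrow> nat \<Rightarrow> real) \<Rightarrow> grid \<Rightarrow> grid \<Rightarrow> real" where
  "dmax N M Dx Dy U1 U2 = Max ((\<lambda>(i, j). max (max \<bar>dx N Dx U1 i j\<bar> \<bar>dx N Dx U2 i j\<bar>)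
                                              (max \<bar>dy M Dy U1 i j\<bar> \<bar>dy M Dy U2 i j\<bar>))
                               ` ({..<N} \<times> {..<M}))"

end

theory Submission
  imports Defs
begin


lemma SBP_pos: "SBP N p Q \<Longrightarrow> i < N \<Longrightarrow> 0 < Pdiag N p i"
  unfolding SBP_def Pdiag_def by auto

lemma delta_aux: "i < (N::nat) \<Longrightarrow> (\<Sum>k<N. f k * (if i = k \<and> P then 1 else 0)) = (if P then f i else (0::real))"
proof (cases P)
  case True
  assume i: "i < N"
  have "(\<Sum>k<N. f k * (if i = k \<and> P then 1 else 0)) = (\<Sum>k<N. if k = i then f k else 0)"
    using True by (intro sum.cong) auto
  also have "\<dots> = f i" using i by (subst sum.delta) auto
  finally show ?thesis using True by simp
qed simp

lemma sbp1:
  assumes S: "SBP N p Q"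
  shows "(\<Sum>i<N. Pdiag N p i * v i * (\<Sum>k<N. Dop (Pdiag N p) Q i k * w k))
       + (\<Sum>i<N. Pdiag N p i * (\<Sum>k<N. Dop (Pdiag N p) Q i k * v k) * w i)
       = v (N-1) * w (N-1) - v 0 * w 0"
proof -
  have N: "2 \<le> N" using S by (simp add: SBP_def)
  have pos: "\<And>i. i < N \<Longrightarrow> Pdiag N p i \<noteq> 0" using SBP_pos[OF S] by (metis less_irrefl)
  have a: "(\<Sum>i<N. Pdiag N p i * v i * (\<Sum>k<N. Dop (Pdiag N p) Q i k * w k))
        = (\<Sum>i<N. \<Sum>k<N. v i * w k * Q i k)"
    by (rule sum.cong, simp, simp add: sum_distrib_left Dop_def pos field_simps)
  have b: "(\<Sum>i<N. Pdiag N p i * (\<Sum>k<N. Dop (Pdiag N p) Q i k * v k) * w i)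
        = (\<Sum>i<N. \<Sum>k<N. v k * w i * Q i k)"
    by (rule sum.cong, simp, simp add: sum_distrib_left sum_distrib_right Dop_def pos field_simps)
  also have "\<dots> = (\<Sum>i<N. \<Sum>k<N. v i * w k * Q k i)" by (rule sum.swap)
  finally have b': "(\<Sum>i<N. Pdiag N p i * (\<Sum>k<N. Dop (Pdiag N p) Q i k * v k) * w i) = \<dots>" .
  have "(\<Sum>i<N. \<Sum>k<N. v i * w k * Q i k) + (\<Sum>i<N. \<Sum>k<N. v i * w k * Q k i)
      = (\<Sum>i<N. \<Sum>k<N. v i * w k * (Q i k + Q k i))"
    by (simp add: sum.distrib[symmetric] algebra_simps)
  also have "\<dots> = (\<Sum>i<N. \<Sum>k<N. v i * w k * ((if i = k \<and> i = N - 1 then 1 else 0) - (if i = k \<and> i = 0 then 1 else 0)))"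
    using S unfolding SBP_def by (intro sum.cong refl) auto
  also have "\<dots> = (\<Sum>i<N. (if i = N - 1 then v i * w i else 0) - (if i = 0 then v i * w i else 0))"
    by (intro sum.cong refl) (simp add: right_diff_distrib sum_subtractf delta_aux)
  also have "\<dots> = v (N-1) * w (N-1) - v 0 * w 0"
    using N by (simp add: sum_subtractf)
  finally show ?thesis using a b' by simp
qed



lemma comm1:
  assumes S: "SBP N p Q"
  shows "2 * (\<Sum>i<N. Pdiag N p i * w i * (a i * (\<Sum>k<N. Dop (Pdiag N p) Q i k * w k)))
       = - (\<Sum>i<N. Pdiag N p i * w i * ((\<Sum>l<N. Dop (Pdiag N p) Q i l * (a l * w l))
               - a i * (\<Sum>l<N. Dop (Pdiag N p) Q i l * w l)))
         + a (N-1) * (w (N-1))\<^sup>2 - a 0 * (w 0)\<^sup>2"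
proof -
  have e: "(\<Sum>i<N. Pdiag N p i * w i * (\<Sum>k<N. Dop (Pdiag N p) Q i k * (a k * w k)))
       + (\<Sum>i<N. Pdiag N p i * (\<Sum>k<N. Dop (Pdiag N p) Q i k * w k) * (a i * w i))
       = w (N-1) * (a (N-1) * w (N-1)) - w 0 * (a 0 * w 0)"
    by (rule sbp1[OF S])
  have x: "(\<Sum>i<N. Pdiag N p i * (\<Sum>k<N. Dop (Pdiag N p) Q i k * w k) * (a i * w i))
     = (\<Sum>i<N. Pdiag N p i * w i * (a i * (\<Sum>k<N. Dop (Pdiag N p) Q i k * w k)))"
    by (simp add: mult_ac)
  have y: "(\<Sum>i<N. Pdiag N p i * w i * ((\<Sum>l<N. Dop (Pdiag N p) Q i l * (a l * w l))
               - a i * (\<Sum>l<N. Dop (Pdiag N p) Q i l * w l)))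
     = (\<Sum>i<N. Pdiag N p i * w i * (\<Sum>k<N. Dop (Pdiag N p) Q i k * (a k * w k)))
       - (\<Sum>i<N. Pdiag N p i * w i * (a i * (\<Sum>k<N. Dop (Pdiag N p) Q i k * w k)))"
    by (simp add: right_diff_distrib sum_subtractf)
  show ?thesis using e x y by (simp add: power2_eq_square algebra_simps)
qed

lemma wCS:
  assumes "\<And>i. i < N \<Longrightarrow> 0 \<le> pd i"
  shows "(\<Sum>i<N. pd i * w i * c i) \<le> normP1 N pd w * normP1 N pd c"
proof -
  have "(\<Sum>i<N. (sqrt (pd i) * w i) * (sqrt (pd i) * c i))\<^sup>2
     \<le> (\<Sum>i<N. (sqrt (pd i) * w i)\<^sup>2) * (\<Sum>i<N. (sqrt (pd i) * c i)\<^sup>2)"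
    by (rule Cauchy_Schwarz_ineq_sum)
  moreover have "(\<Sum>i<N. (sqrt (pd i) * w i) * (sqrt (pd i) * c i)) = (\<Sum>i<N. pd i * w i * c i)"
    using assms by (intro sum.cong refl) (simp add: algebra_simps)
  moreover have "\<And>w. (\<Sum>i<N. (sqrt (pd i) * w i)\<^sup>2) = (\<Sum>i<N. pd i * (w i)\<^sup>2)"
    using assms by (intro sum.cong refl) (simp add: power_mult_distrib)
  ultimately have "(\<Sum>i<N. pd i * w i * c i)\<^sup>2 \<le> (\<Sum>i<N. pd i * (w i)\<^sup>2) * (\<Sum>i<N. pd i * (c i)\<^sup>2)"
    by simp
  hence "sqrt ((\<Sum>i<N. pd i * w i * c i)\<^sup>2) \<le> sqrt ((\<Sum>i<N. pd i * (w i)\<^sup>2) * (\<Sum>i<N. pd i * (c i)\<^sup>2))"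
    using real_sqrt_le_mono by blast
  thus ?thesis unfolding normP1_def by (simp add: real_sqrt_mult)
qed

lemma normP1_sq:
  assumes "\<And>i. i < N \<Longrightarrow> 0 \<le> pd i"
  shows "(normP1 N pd w)\<^sup>2 = (\<Sum>i<N. pd i * (w i)\<^sup>2)"
proof -
  have "0 \<le> (\<Sum>i<N. pd i * (w i)\<^sup>2)" by (rule sum_nonneg) (simp add: assms)
  thus ?thesis unfolding normP1_def by simp
qed

lemma gx_last: "2 \<le> N \<Longrightarrow> gx N (N - 1) = 1"
  by (simp add: gx_def)

lemma line:
  assumes S: "SBP N p Q" and CB: "commutator_bound N p Q C0" and sm: "smooth01 ub"
    and K: "C0 * Linf01 (deriv ub) \<le> K"
    and sR: "sR \<le> min (ub 1) 0 / 2" and sL: "sL \<le> - max (ub 0) 0 / 2"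
  shows "-2 * (\<Sum>i<N. Pdiag N p i * w i * (ub (gx N i) * (\<Sum>k<N. Dop (Pdiag N p) Q i k * w k)))
         + 2 * (sL * (w 0)\<^sup>2 + sR * (w (N-1))\<^sup>2) \<le> K * (\<Sum>i<N. Pdiag N p i * (w i)\<^sup>2)"
proof -
  define pd where "pd = Pdiag N p"
  define D where "D = Dop pd Q"
  define c where "c = (\<lambda>k. (\<Sum>l<N. D k l * (ub (gx N l) * w l)) - ub (gx N k) * (\<Sum>l<N. D k l * w l))"
  have N: "2 \<le> N" using S by (simp add: SBP_def)
  have pd0: "\<And>i. i < N \<Longrightarrow> 0 \<le> pd i" using SBP_pos[OF S] unfolding pd_def by (simp add: less_imp_le)
  have c1: "normP1 N pd c \<le> C0 * Linf01 (deriv ub) * normP1 N pd w"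
    using CB sm unfolding commutator_bound_def c_def D_def pd_def by blast
  have "0 \<le> (\<Sum>i<N. pd i * (w i)\<^sup>2)" by (rule sum_nonneg) (simp add: pd0)
  hence nw: "0 \<le> normP1 N pd w" by (simp add: normP1_def)
  have "(\<Sum>i<N. pd i * w i * c i) \<le> normP1 N pd w * normP1 N pd c" by (rule wCS[OF pd0])
  also have "\<dots> \<le> normP1 N pd w * (C0 * Linf01 (deriv ub) * normP1 N pd w)"
    using c1 nw by (simp add: mult_left_mono)
  also have "\<dots> = C0 * Linf01 (deriv ub) * (normP1 N pd w)\<^sup>2" by (simp add: power2_eq_square)
  also have "\<dots> \<le> K * (normP1 N pd w)\<^sup>2" using K by (simp add: mult_right_mono)
  also have "\<dots> = K * (\<Sum>i<N. pd i * (w i)\<^sup>2)" using normP1_sq[OF pd0] by simp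
  finally have cw: "(\<Sum>i<N. pd i * w i * c i) \<le> K * (\<Sum>i<N. pd i * (w i)\<^sup>2)" .
  have eq: "2 * (\<Sum>i<N. pd i * w i * (ub (gx N i) * (\<Sum>k<N. D i k * w k)))
      = - (\<Sum>i<N. pd i * w i * c i) + ub 1 * (w (N-1))\<^sup>2 - ub 0 * (w 0)\<^sup>2"
    using comm1[OF S, of w "\<lambda>i. ub (gx N i)"] gx_last[OF N]
    unfolding pd_def D_def c_def by (simp add: gx_def)
  have b1: "(2 * sR - ub 1) * (w (N-1))\<^sup>2 \<le> 0"
    using sR by (intro mult_nonpos_nonneg) auto
  have b2: "(2 * sL + ub 0) * (w 0)\<^sup>2 \<le> 0"
    using sL by (intro mult_nonpos_nonneg) auto
  show ?thesis using eq cw b1 b2 unfolding pd_def[symmetric] D_def[symmetric]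
    by (simp add: algebra_simps)
qed



lemma ind_sum: "a < (N::nat) \<Longrightarrow> (\<Sum>i<N. f i * ind (i = a)) = (f a :: real)"
proof -
  assume a: "a < N"
  have "(\<Sum>i<N. f i * ind (i = a)) = (\<Sum>i<N. if i = a then f i else 0)"
    by (intro sum.cong) (auto simp: ind_def)
  also have "\<dots> = f a" using a by (subst sum.delta) auto
  finally show ?thesis .
qed

lemma xdir:
  assumes S: "SBP N p Qx" and CB: "commutator_bound N p Qx C0"
   and py: "\<forall>j<M. 0 \<le> py j"
   and sm: "\<forall>j<M. smooth01 (\<lambda>x. u (x, gx M j)) \<and> C0 * Linf01 (deriv (\<lambda>x. u (x, gx M j))) \<le> K"
   and pen: "\<forall>j<M. sR (N-1) j \<le> min (u (1, gx M j)) 0 / 2 \<and> sL 0 j \<le> - max (u (0, gx M j)) 0 / 2"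
  shows "-2 * (\<Sum>i<N. \<Sum>j<M. Pdiag N p i * py j * w i j * (ug N M u i j * dx N (Dop (Pdiag N p) Qx) w i j))
       + 2 * (\<Sum>i<N. \<Sum>j<M. Pdiag N p i * py j * w i j * ((sL i j * ind (i = 0) * w i j + sR i j * ind (i = N - 1) * w i j) / Pdiag N p i))
       \<le> K * ipP N M (Pdiag N p) py w w"
proof -
  define pd where "pd = Pdiag N p"
  define D where "D = Dop pd Qx"
  have N: "2 \<le> N" using S by (simp add: SBP_def)
  have pdnz: "\<And>i. i < N \<Longrightarrow> pd i \<noteq> 0" using SBP_pos[OF S] unfolding pd_def by (metis less_irrefl)
  have A: "(\<Sum>i<N. \<Sum>j<M. pd i * py j * w i j * (ug N M u i j * dx N D w i j))
     = (\<Sum>j<M. py j * (\<Sum>i<N. pd i * w i j * (u (gx N i, gx M j) * (\<Sum>k<N. D i k * w k j))))"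
    by (subst sum.swap) (simp add: sum_distrib_left ug_def dx_def mult_ac)
  have B1: "\<And>j. (\<Sum>i<N. pd i * py j * w i j * ((sL i j * ind (i = 0) * w i j + sR i j * ind (i = N - 1) * w i j) / pd i))
      = (\<Sum>i<N. (py j * sL i j * (w i j)\<^sup>2) * ind (i = 0) + (py j * sR i j * (w i j)\<^sup>2) * ind (i = N - 1))"
    by (intro sum.cong refl) (simp add: pdnz field_simps power2_eq_square)
  have B: "(\<Sum>i<N. \<Sum>j<M. pd i * py j * w i j * ((sL i j * ind (i = 0) * w i j + sR i j * ind (i = N - 1) * w i j) / pd i))
     = (\<Sum>j<M. py j * (sL 0 j * (w 0 j)\<^sup>2 + sR (N-1) j * (w (N-1) j)\<^sup>2))"
  proof (subst sum.swap, intro sum.cong refl)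
    fix j
    have "(\<Sum>i<N. (py j * sL i j * (w i j)\<^sup>2) * ind (i = 0)) = py j * sL 0 j * (w 0 j)\<^sup>2"
      using N by (intro ind_sum[of 0 N "\<lambda>i. py j * sL i j * (w i j)\<^sup>2"]) auto
    moreover have "(\<Sum>i<N. (py j * sR i j * (w i j)\<^sup>2) * ind (i = N - 1)) = py j * sR (N-1) j * (w (N-1) j)\<^sup>2"
      using N by (intro ind_sum[of "N-1" N "\<lambda>i. py j * sR i j * (w i j)\<^sup>2"]) auto
    ultimately show "(\<Sum>i<N. pd i * py j * w i j * ((sL i j * ind (i = 0) * w i j + sR i j * ind (i = N - 1) * w i j) / pd i))
      = py j * (sL 0 j * (w 0 j)\<^sup>2 + sR (N-1) j * (w (N-1) j)\<^sup>2)"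
      by (simp only: B1 sum.distrib) (simp add: algebra_simps)
  qed
  have C: "ipP N M pd py w w = (\<Sum>j<M. py j * (\<Sum>i<N. pd i * (w i j)\<^sup>2))"
    unfolding ipP_def by (subst sum.swap) (simp add: sum_distrib_left power2_eq_square mult_ac)
  have L: "\<And>j. j < M \<Longrightarrow> -2 * (\<Sum>i<N. pd i * w i j * (u (gx N i, gx M j) * (\<Sum>k<N. D i k * w k j)))
         + 2 * (sL 0 j * (w 0 j)\<^sup>2 + sR (N-1) j * (w (N-1) j)\<^sup>2) \<le> K * (\<Sum>i<N. pd i * (w i j)\<^sup>2)"
  proof -
    fix j assume j: "j < M"
    show "?thesis j" unfolding pd_def D_def
      using line[OF S CB, of "\<lambda>x. u (x, gx M j)" K "sR (N-1) j" "sL 0 j" "\<lambda>i. w i j"] sm pen j by auto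
  qed
  have "-2 * (\<Sum>j<M. py j * (\<Sum>i<N. pd i * w i j * (u (gx N i, gx M j) * (\<Sum>k<N. D i k * w k j))))
       + 2 * (\<Sum>j<M. py j * (sL 0 j * (w 0 j)\<^sup>2 + sR (N-1) j * (w (N-1) j)\<^sup>2))
     = (\<Sum>j<M. py j * (-2 * (\<Sum>i<N. pd i * w i j * (u (gx N i, gx M j) * (\<Sum>k<N. D i k * w k j)))
         + 2 * (sL 0 j * (w 0 j)\<^sup>2 + sR (N-1) j * (w (N-1) j)\<^sup>2)))"
    by (simp add: sum_distrib_left sum.distrib algebra_simps)
  also have "\<dots> \<le> (\<Sum>j<M. py j * (K * (\<Sum>i<N. pd i * (w i j)\<^sup>2)))"
    using L py by (intro sum_mono mult_left_mono) auto
  also have "\<dots> = K * ipP N M pd py w w" unfolding C by (simp add: sum_distrib_left mult_ac)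
  finally have "-2 * (\<Sum>i<N. \<Sum>j<M. pd i * py j * w i j * (ug N M u i j * dx N D w i j))
       + 2 * (\<Sum>i<N. \<Sum>j<M. pd i * py j * w i j * ((sL i j * ind (i = 0) * w i j + sR i j * ind (i = N - 1) * w i j) / pd i))
       \<le> K * ipP N M pd py w w" unfolding A B .
  thus ?thesis unfolding pd_def D_def .
qed


lemma ydir:
  assumes S: "SBP M q Qy" and CB: "commutator_bound M q Qy C0"
   and px: "\<forall>i<N. 0 \<le> px i"
   and sm: "\<forall>i<N. smooth01 (\<lambda>y. u (gx N i, y)) \<and> C0 * Linf01 (deriv (\<lambda>y. u (gx N i, y))) \<le> K"
   and pen: "\<forall>i<N. sU i (M-1) \<le> min (u (gx N i, 1)) 0 / 2 \<and> sD i 0 \<le> - max (u (gx N i, 0)) 0 / 2"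
  shows "-2 * (\<Sum>i<N. \<Sum>j<M. px i * Pdiag M q j * w i j * (ug N M u i j * dy M (Dop (Pdiag M q) Qy) w i j))
       + 2 * (\<Sum>i<N. \<Sum>j<M. px i * Pdiag M q j * w i j * ((sD i j * ind (j = 0) * w i j + sU i j * ind (j = M - 1) * w i j) / Pdiag M q j))
       \<le> K * ipP N M px (Pdiag M q) w w"
proof -
  define pd where "pd = Pdiag M q"
  define D where "D = Dop pd Qy"
  have M: "2 \<le> M" using S by (simp add: SBP_def)
  have pdnz: "\<And>i. i < M \<Longrightarrow> pd i \<noteq> 0" using SBP_pos[OF S] unfolding pd_def by (metis less_irrefl)
  have A: "(\<Sum>i<N. \<Sum>j<M. px i * pd j * w i j * (ug N M u i j * dy M D w i j))
     = (\<Sum>i<N. px i * (\<Sum>j<M. pd j * w i j * (u (gx N i, gx M j) * (\<Sum>k<M. D j k * w i k))))"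
    by (simp add: sum_distrib_left ug_def dy_def mult_ac)
  have B1: "\<And>i. (\<Sum>j<M. px i * pd j * w i j * ((sD i j * ind (j = 0) * w i j + sU i j * ind (j = M - 1) * w i j) / pd j))
      = (\<Sum>j<M. (px i * sD i j * (w i j)\<^sup>2) * ind (j = 0) + (px i * sU i j * (w i j)\<^sup>2) * ind (j = M - 1))"
    by (intro sum.cong refl) (simp add: pdnz field_simps power2_eq_square)
  have B: "(\<Sum>i<N. \<Sum>j<M. px i * pd j * w i j * ((sD i j * ind (j = 0) * w i j + sU i j * ind (j = M - 1) * w i j) / pd j))
     = (\<Sum>i<N. px i * (sD i 0 * (w i 0)\<^sup>2 + sU i (M-1) * (w i (M-1))\<^sup>2))"
  proof (intro sum.cong refl)
    fix i
    have "(\<Sum>j<M. (px i * sD i j * (w i j)\<^sup>2) * ind (j = 0)) = px i * sD i 0 * (w i 0)\<^sup>2"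
      using M by (intro ind_sum[of 0 M "\<lambda>j. px i * sD i j * (w i j)\<^sup>2"]) auto
    moreover have "(\<Sum>j<M. (px i * sU i j * (w i j)\<^sup>2) * ind (j = M - 1)) = px i * sU i (M-1) * (w i (M-1))\<^sup>2"
      using M by (intro ind_sum[of "M-1" M "\<lambda>j. px i * sU i j * (w i j)\<^sup>2"]) auto
    ultimately show "(\<Sum>j<M. px i * pd j * w i j * ((sD i j * ind (j = 0) * w i j + sU i j * ind (j = M - 1) * w i j) / pd j))
      = px i * (sD i 0 * (w i 0)\<^sup>2 + sU i (M-1) * (w i (M-1))\<^sup>2)"
      by (simp only: B1 sum.distrib) (simp add: algebra_simps)
  qed
  have C: "ipP N M px pd w w = (\<Sum>i<N. px i * (\<Sum>j<M. pd j * (w i j)\<^sup>2))"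
    unfolding ipP_def by (simp add: sum_distrib_left power2_eq_square mult_ac)
  have L: "\<And>i. i < N \<Longrightarrow> -2 * (\<Sum>j<M. pd j * w i j * (u (gx N i, gx M j) * (\<Sum>k<M. D j k * w i k)))
         + 2 * (sD i 0 * (w i 0)\<^sup>2 + sU i (M-1) * (w i (M-1))\<^sup>2) \<le> K * (\<Sum>j<M. pd j * (w i j)\<^sup>2)"
  proof -
    fix i assume i: "i < N"
    show "?thesis i" unfolding pd_def D_def
      using line[OF S CB, of "\<lambda>y. u (gx N i, y)" K "sU i (M-1)" "sD i 0" "\<lambda>j. w i j"] sm pen i by auto
  qed
  have "-2 * (\<Sum>i<N. px i * (\<Sum>j<M. pd j * w i j * (u (gx N i, gx M j) * (\<Sum>k<M. D j k * w i k))))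
       + 2 * (\<Sum>i<N. px i * (sD i 0 * (w i 0)\<^sup>2 + sU i (M-1) * (w i (M-1))\<^sup>2))
     = (\<Sum>i<N. px i * (-2 * (\<Sum>j<M. pd j * w i j * (u (gx N i, gx M j) * (\<Sum>k<M. D j k * w i k)))
         + 2 * (sD i 0 * (w i 0)\<^sup>2 + sU i (M-1) * (w i (M-1))\<^sup>2)))"
    by (simp add: sum_distrib_left sum.distrib algebra_simps)
  also have "\<dots> \<le> (\<Sum>i<N. px i * (K * (\<Sum>j<M. pd j * (w i j)\<^sup>2)))"
    using L px by (intro sum_mono mult_left_mono) auto
  also have "\<dots> = K * ipP N M px pd w w" unfolding C by (simp add: sum_distrib_left mult_ac)
  finally have "-2 * (\<Sum>i<N. \<Sum>j<M. px i * pd j * w i j * (ug N M u i j * dy M D w i j))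
       + 2 * (\<Sum>i<N. \<Sum>j<M. px i * pd j * w i j * ((sD i j * ind (j = 0) * w i j + sU i j * ind (j = M - 1) * w i j) / pd j))
       \<le> K * ipP N M px pd w w" unfolding A B .
  thus ?thesis unfolding pd_def D_def .
qed



lemma bnd_line:
  assumes S: "SBP M q Q"
  shows "(\<Sum>j<M. Pdiag M q j * v j * (- (\<Sum>l<M. Dop (Pdiag M q) Q j l * z l)
            + (ind (j = M - 1) - ind (j = 0)) * z j / Pdiag M q j))
       = (\<Sum>j<M. Pdiag M q j * (\<Sum>l<M. Dop (Pdiag M q) Q j l * v l) * z j)"
proof -
  have M: "2 \<le> M" using S by (simp add: SBP_def)
  have pdnz: "\<And>i. i < M \<Longrightarrow> Pdiag M q i \<noteq> 0" using SBP_pos[OF S] by (metis less_irrefl)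
  have e: "(\<Sum>j<M. Pdiag M q j * v j * (- (\<Sum>l<M. Dop (Pdiag M q) Q j l * z l)
            + (ind (j = M - 1) - ind (j = 0)) * z j / Pdiag M q j))
     = - (\<Sum>j<M. Pdiag M q j * v j * (\<Sum>l<M. Dop (Pdiag M q) Q j l * z l))
       + ((\<Sum>j<M. (v j * z j) * ind (j = M - 1)) - (\<Sum>j<M. (v j * z j) * ind (j = 0)))"
  proof -
    have r: "- (\<Sum>j<M. Pdiag M q j * v j * (\<Sum>l<M. Dop (Pdiag M q) Q j l * z l))
       + ((\<Sum>j<M. (v j * z j) * ind (j = M - 1)) - (\<Sum>j<M. (v j * z j) * ind (j = 0)))
      = (\<Sum>j<M. - (Pdiag M q j * v j * (\<Sum>l<M. Dop (Pdiag M q) Q j l * z l))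
       + ((v j * z j) * ind (j = M - 1) - (v j * z j) * ind (j = 0)))"
      by (simp add: sum.distrib sum_subtractf sum_negf)
    show ?thesis unfolding r by (intro sum.cong refl) (simp add: pdnz field_simps)
  qed
  have i1: "(\<Sum>j<M. (v j * z j) * ind (j = M - 1)) = v (M-1) * z (M-1)"
    using M by (intro ind_sum[of "M-1" M "\<lambda>j. v j * z j"]) auto
  have i2: "(\<Sum>j<M. (v j * z j) * ind (j = 0)) = v 0 * z 0"
    using M by (intro ind_sum[of 0 M "\<lambda>j. v j * z j"]) auto
  show ?thesis using e i1 i2 sbp1[OF S, of v z] by simp
qed

lemma dxdy_comm: "dx N Dx (dy M Dy w) i j = dy M Dy (dx N Dx w) i j"
  unfolding dx_def dy_def by (simp add: sum_distrib_left mult_ac, rule sum.swap)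

lemma eps_ident:
  fixes w1 w2 :: grid
  assumes Sx: "SBP N p Qx" and Sy: "SBP M q Qy"
  defines "px \<equiv> Pdiag N p" and "py \<equiv> Pdiag M q"
  defines "Dx \<equiv> Dop px Qx" and "Dy \<equiv> Dop py Qy"
  defines "om \<equiv> curlg N M Dx Dy w1 w2"
  shows "ipP N M px py w1 (\<lambda>i j. - (- dy M Dy (dy M Dy w1) i j + dx N Dx (dy M Dy w2) i j)
                 + (ind (j = M - 1) - ind (j = 0)) * om i j / py j)
       + ipP N M px py w2 (\<lambda>i j. - (dx N Dx (dy M Dy w1) i j - dx N Dx (dx N Dx w2) i j)
                 - (ind (i = N - 1) - ind (i = 0)) * om i j / px i)
       = - ipP N M px py om om"
proof -
  have dyom: "\<And>i j. dy M Dy om i j = dy M Dy (dx N Dx w2) i j - dy M Dy (dy M Dy w1) i j"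
    unfolding om_def curlg_def dy_def by (simp add: right_diff_distrib sum_subtractf)
  have dxom: "\<And>i j. dx N Dx om i j = dx N Dx (dx N Dx w2) i j - dx N Dx (dy M Dy w1) i j"
    unfolding om_def curlg_def dx_def by (simp add: right_diff_distrib sum_subtractf)
  have E1: "ipP N M px py w1 (\<lambda>i j. - (- dy M Dy (dy M Dy w1) i j + dx N Dx (dy M Dy w2) i j)
                 + (ind (j = M - 1) - ind (j = 0)) * om i j / py j)
      = ipP N M px py (dy M Dy w1) om"
  proof -
    have "ipP N M px py w1 (\<lambda>i j. - (- dy M Dy (dy M Dy w1) i j + dx N Dx (dy M Dy w2) i j)
                 + (ind (j = M - 1) - ind (j = 0)) * om i j / py j)
       = (\<Sum>i<N. px i * (\<Sum>j<M. py j * w1 i j * (- (\<Sum>l<M. Dy j l * om i l)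
            + (ind (j = M - 1) - ind (j = 0)) * om i j / py j)))"
    proof -
      have f: "(\<lambda>i j. - (- dy M Dy (dy M Dy w1) i j + dx N Dx (dy M Dy w2) i j)
                 + (ind (j = M - 1) - ind (j = 0)) * om i j / py j)
           = (\<lambda>i j. - (\<Sum>l<M. Dy j l * om i l) + (ind (j = M - 1) - ind (j = 0)) * om i j / py j)"
        using dyom by (auto simp: dxdy_comm dy_def[of M Dy om] fun_eq_iff)
      show ?thesis unfolding f ipP_def by (simp add: sum_distrib_left mult_ac)
    qed
    also have "\<dots> = (\<Sum>i<N. px i * (\<Sum>j<M. py j * (\<Sum>l<M. Dy j l * w1 i l) * om i j))"
      unfolding py_def Dy_def by (simp only: bnd_line[OF Sy])
    also have "\<dots> = ipP N M px py (dy M Dy w1) om"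
      unfolding ipP_def dy_def by (simp add: sum_distrib_left mult_ac)
    finally show ?thesis .
  qed
  have E2: "ipP N M px py w2 (\<lambda>i j. - (dx N Dx (dy M Dy w1) i j - dx N Dx (dx N Dx w2) i j)
                 - (ind (i = N - 1) - ind (i = 0)) * om i j / px i)
      = - ipP N M px py (dx N Dx w2) om"
  proof -
    have "ipP N M px py w2 (\<lambda>i j. - (dx N Dx (dy M Dy w1) i j - dx N Dx (dx N Dx w2) i j)
                 - (ind (i = N - 1) - ind (i = 0)) * om i j / px i)
       = - (\<Sum>j<M. py j * (\<Sum>i<N. px i * w2 i j * (- (\<Sum>l<N. Dx i l * om l j)
            + (ind (i = N - 1) - ind (i = 0)) * om i j / px i)))"
    proof -
      have f: "(\<lambda>i j. - (dx N Dx (dy M Dy w1) i j - dx N Dx (dx N Dx w2) i j)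
                 - (ind (i = N - 1) - ind (i = 0)) * om i j / px i)
           = (\<lambda>i j. - (- (\<Sum>l<N. Dx i l * om l j) + (ind (i = N - 1) - ind (i = 0)) * om i j / px i))"
        using dxom by (auto simp: dx_def[of N Dx om] fun_eq_iff)
      show ?thesis unfolding f ipP_def by (subst sum.swap) (simp add: sum_distrib_left sum_negf[symmetric] algebra_simps)
    qed
    also have "\<dots> = - (\<Sum>j<M. py j * (\<Sum>i<N. px i * (\<Sum>l<N. Dx i l * w2 l j) * om i j))"
      unfolding px_def Dx_def by (simp only: bnd_line[OF Sx])
    also have "\<dots> = - ipP N M px py (dx N Dx w2) om"
      unfolding ipP_def dx_def by (subst sum.swap) (simp add: sum_distrib_left mult_ac)
    finally show ?thesis .
  qed
  have "ipP N M px py (dy M Dy w1) om - ipP N M px py (dx N Dx w2) om = - ipP N M px py om om"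
    unfolding ipP_def om_def curlg_def by (simp add: sum_subtractf[symmetric] sum_negf[symmetric] algebra_simps)
  thus ?thesis using E1 E2 by simp
qed



lemma ipP_add: "ipP N M px py v (\<lambda>i j. f i j + g i j) = ipP N M px py v f + ipP N M px py v g"
  unfolding ipP_def by (simp add: sum.distrib algebra_simps)
lemma ipP_diff: "ipP N M px py v (\<lambda>i j. f i j - g i j) = ipP N M px py v f - ipP N M px py v g"
  unfolding ipP_def by (simp add: sum_subtractf algebra_simps)
lemma ipP_neg: "ipP N M px py v (\<lambda>i j. - f i j) = - ipP N M px py v f"
  unfolding ipP_def by (simp add: sum_negf)
lemma ipP_scale: "ipP N M px py v (\<lambda>i j. k * f i j) = k * ipP N M px py v f"
  unfolding ipP_def by (simp add: sum_distrib_left mult_ac)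

lemma ipP_nonneg: "(\<forall>i<N. 0 \<le> px i) \<Longrightarrow> (\<forall>j<M. 0 \<le> py j) \<Longrightarrow> 0 \<le> ipP N M px py w w"
  unfolding ipP_def by (intro sum_nonneg) (simp add: mult.assoc)

lemma pt_bound:
  fixes a b c e d x y :: real
  assumes "\<bar>a\<bar> \<le> d" "\<bar>b\<bar> \<le> d" "\<bar>c\<bar> \<le> d" "\<bar>e\<bar> \<le> d"
  shows "x * (- a * x + b * y) + y * (c * x - e * y) \<le> 2 * d * (x * x + y * y)"
proof -
  have 1: "- a * (x * x) \<le> d * (x * x)" using assms(1) by (intro mult_right_mono) auto
  have 2: "- e * (y * y) \<le> d * (y * y)" using assms(4) by (intro mult_right_mono) auto
  have "(b + c) * (x * y) \<le> \<bar>b + c\<bar> * \<bar>x * y\<bar>" by (metis abs_ge_self abs_mult)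
  also have "\<dots> \<le> (2 * d) * \<bar>x * y\<bar>" using assms(2,3) by (intro mult_right_mono) auto
  also have "\<dots> \<le> d * (x * x + y * y)"
  proof -
    have "2 * \<bar>x * y\<bar> \<le> x * x + y * y"
    proof -
      have "0 \<le> (\<bar>x\<bar> - \<bar>y\<bar>) * (\<bar>x\<bar> - \<bar>y\<bar>)" by simp
      hence "0 \<le> \<bar>x\<bar> * \<bar>x\<bar> + \<bar>y\<bar> * \<bar>y\<bar> - 2 * (\<bar>x\<bar> * \<bar>y\<bar>)" by (simp add: algebra_simps)
      thus ?thesis by (simp add: abs_mult)
    qed
    moreover have "0 \<le> d" using assms(1) by linarith
    ultimately show ?thesis by (metis mult.assoc mult.left_commute mult_left_mono)
  qed
  finally have 3: "(b + c) * (x * y) \<le> d * (x * x + y * y)" .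
  show ?thesis using 1 2 3 by (simp add: algebra_simps)
qed

lemma cterm:
  assumes px: "\<forall>i<N. 0 \<le> px i" and py: "\<forall>j<M. 0 \<le> py j"
    and bd: "\<forall>i<N. \<forall>j<M. \<bar>a i j\<bar> \<le> d \<and> \<bar>b i j\<bar> \<le> d \<and> \<bar>c i j\<bar> \<le> d \<and> \<bar>e i j\<bar> \<le> d"
  shows "ipP N M px py w1 (\<lambda>i j. - a i j * w1 i j + b i j * w2 i j)
       + ipP N M px py w2 (\<lambda>i j. c i j * w1 i j - e i j * w2 i j)
       \<le> 2 * d * (ipP N M px py w1 w1 + ipP N M px py w2 w2)"
proof -
  have "ipP N M px py w1 (\<lambda>i j. - a i j * w1 i j + b i j * w2 i j)
       + ipP N M px py w2 (\<lambda>i j. c i j * w1 i j - e i j * w2 i j)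
     = (\<Sum>i<N. \<Sum>j<M. px i * py j * (w1 i j * (- a i j * w1 i j + b i j * w2 i j) + w2 i j * (c i j * w1 i j - e i j * w2 i j)))"
    unfolding ipP_def by (simp add: sum.distrib[symmetric] algebra_simps)
  also have "\<dots> \<le> (\<Sum>i<N. \<Sum>j<M. px i * py j * (2 * d * (w1 i j * w1 i j + w2 i j * w2 i j)))"
    using px py bd by (intro sum_mono mult_left_mono pt_bound) auto
  also have "\<dots> = 2 * d * (ipP N M px py w1 w1 + ipP N M px py w2 w2)"
    unfolding ipP_def by (simp add: sum.distrib[symmetric] sum_distrib_left algebra_simps)
  finally show ?thesis .
qed



lemma gx_range: "i < N \<Longrightarrow> gx N i \<in> {0..1}"
  unfolding gx_def by (auto simp: divide_le_eq_1 of_nat_diff)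

lemma dmax_ge:
  assumes "i < N" "j < M"
  shows "\<bar>dx N Dx U1 i j\<bar> \<le> dmax N M Dx Dy U1 U2 \<and> \<bar>dx N Dx U2 i j\<bar> \<le> dmax N M Dx Dy U1 U2
       \<and> \<bar>dy M Dy U1 i j\<bar> \<le> dmax N M Dx Dy U1 U2 \<and> \<bar>dy M Dy U2 i j\<bar> \<le> dmax N M Dx Dy U1 U2"
proof -
  let ?g = "\<lambda>(i, j). max (max \<bar>dx N Dx U1 i j\<bar> \<bar>dx N Dx U2 i j\<bar>) (max \<bar>dy M Dy U1 i j\<bar> \<bar>dy M Dy U2 i j\<bar>)"
  have "?g (i, j) \<le> Max (?g ` ({..<N} \<times> {..<M}))"
    using assms by (intro Max_ge) auto
  thus ?thesis unfolding dmax_def by auto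
qed

lemma energy:
  fixes w1 w2 :: grid
  assumes Sx: "SBP N p Qx" and Sy: "SBP M q Qy"
    and CBx: "commutator_bound N p Qx C0" and CBy: "commutator_bound M q Qy C0"
    and Kx: "\<forall>y\<in>{0..1}. smooth01 (\<lambda>x. u1 (x, y)) \<and> C0 * Linf01 (deriv (\<lambda>x. u1 (x, y))) \<le> K"
    and Ky: "\<forall>x\<in>{0..1}. smooth01 (\<lambda>y. u2 (x, y)) \<and> C0 * Linf01 (deriv (\<lambda>y. u2 (x, y))) \<le> K"
    and pen: "penalty_ok N M u1 u2 sL sR sD sU"
  defines "px \<equiv> Pdiag N p" and "py \<equiv> Pdiag M q"
  defines "Dx \<equiv> Dop px Qx" and "Dy \<equiv> Dop py Qy"
  defines "U1 \<equiv> ug N M u1" and "U2 \<equiv> ug N M u2"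
  defines "d \<equiv> dmax N M Dx Dy U1 U2"
  defines "om \<equiv> curlg N M Dx Dy w1 w2"
  shows "2 * ipP N M px py w1 (rhs1 eps N M px py Dx Dy U1 U2 sL sR sD sU w1 w2)
       + 2 * ipP N M px py w2 (rhs2 eps N M px py Dx Dy U1 U2 sL sR sD sU w1 w2)
       \<le> (2 * K + 4 * d) * (ipP N M px py w1 w1 + ipP N M px py w2 w2) - 2 * eps * ipP N M px py om om"
proof -
  have px0: "\<forall>i<N. 0 \<le> px i" using SBP_pos[OF Sx] unfolding px_def by (simp add: less_imp_le)
  have py0: "\<forall>j<M. 0 \<le> py j" using SBP_pos[OF Sy] unfolding py_def by (simp add: less_imp_le)
  define Bx where "Bx = (\<lambda>w::grid. \<lambda>i j. (sL i j * ind (i = 0) * w i j + sR i j * ind (i = N - 1) * w i j) / px i)"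
  define By where "By = (\<lambda>w::grid. \<lambda>i j. (sD i j * ind (j = 0) * w i j + sU i j * ind (j = M - 1) * w i j) / py j)"
  define E1 where "E1 = (\<lambda>i j. - (- dy M Dy (dy M Dy w1) i j + dx N Dx (dy M Dy w2) i j)
                 + (ind (j = M - 1) - ind (j = 0)) * om i j / py j)"
  define E2 where "E2 = (\<lambda>i j. - (dx N Dx (dy M Dy w1) i j - dx N Dx (dx N Dx w2) i j)
                 - (ind (i = N - 1) - ind (i = 0)) * om i j / px i)"
  have r1: "rhs1 eps N M px py Dx Dy U1 U2 sL sR sD sU w1 w2
     = (\<lambda>i j. ((- (U1 i j * dx N Dx w1 i j) + Bx w1 i j) + (- (U2 i j * dy M Dy w1 i j) + By w1 i j))
         + (- dy M Dy U2 i j * w1 i j + dy M Dy U1 i j * w2 i j) + eps * E1 i j)"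
    unfolding rhs1_def Bop_def Bx_def By_def E1_def om_def by (simp add: fun_eq_iff algebra_simps add_divide_distrib)
  have r2: "rhs2 eps N M px py Dx Dy U1 U2 sL sR sD sU w1 w2
     = (\<lambda>i j. ((- (U1 i j * dx N Dx w2 i j) + Bx w2 i j) + (- (U2 i j * dy M Dy w2 i j) + By w2 i j))
         + (dx N Dx U2 i j * w1 i j - dx N Dx U1 i j * w2 i j) + eps * E2 i j)"
    unfolding rhs2_def Bop_def Bx_def By_def E2_def om_def by (simp add: fun_eq_iff algebra_simps add_divide_distrib)
  have N: "2 \<le> N" using Sx by (simp add: SBP_def)
  have M: "2 \<le> M" using Sy by (simp add: SBP_def)
  have smx: "\<forall>j<M. smooth01 (\<lambda>x. u1 (x, gx M j)) \<and> C0 * Linf01 (deriv (\<lambda>x. u1 (x, gx M j))) \<le> K"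
    using Kx gx_range by blast
  have smy: "\<forall>i<N. smooth01 (\<lambda>y. u2 (gx N i, y)) \<and> C0 * Linf01 (deriv (\<lambda>y. u2 (gx N i, y))) \<le> K"
    using Ky gx_range by blast
  have penx: "\<forall>j<M. sR (N-1) j \<le> min (u1 (1, gx M j)) 0 / 2 \<and> sL 0 j \<le> - max (u1 (0, gx M j)) 0 / 2"
    using pen unfolding penalty_ok_def by blast
  have peny: "\<forall>i<N. sU i (M-1) \<le> min (u2 (gx N i, 1)) 0 / 2 \<and> sD i 0 \<le> - max (u2 (gx N i, 0)) 0 / 2"
    using pen unfolding penalty_ok_def by blast
  have X: "\<And>w. -2 * ipP N M px py w (\<lambda>i j. U1 i j * dx N Dx w i j) + 2 * ipP N M px py w (Bx w)
      \<le> K * ipP N M px py w w"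
    using xdir[OF Sx CBx py0, of u1 K sR sL, OF smx penx] unfolding ipP_def U1_def Dx_def px_def Bx_def .
  have Y: "\<And>w. -2 * ipP N M px py w (\<lambda>i j. U2 i j * dy M Dy w i j) + 2 * ipP N M px py w (By w)
      \<le> K * ipP N M px py w w"
    using ydir[OF Sy CBy px0, of u2 K sU sD, OF smy peny] unfolding ipP_def U2_def Dy_def py_def By_def .
  have C: "ipP N M px py w1 (\<lambda>i j. - dy M Dy U2 i j * w1 i j + dy M Dy U1 i j * w2 i j)
       + ipP N M px py w2 (\<lambda>i j. dx N Dx U2 i j * w1 i j - dx N Dx U1 i j * w2 i j)
       \<le> 2 * d * (ipP N M px py w1 w1 + ipP N M px py w2 w2)"
    using dmax_ge unfolding d_def by (intro cterm[OF px0 py0]) auto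
  have E: "ipP N M px py w1 E1 + ipP N M px py w2 E2 = - ipP N M px py om om"
    unfolding E1_def E2_def om_def px_def py_def Dx_def Dy_def by (rule eps_ident[OF Sx Sy])
  have lhs: "2 * ipP N M px py w1 (rhs1 eps N M px py Dx Dy U1 U2 sL sR sD sU w1 w2)
       + 2 * ipP N M px py w2 (rhs2 eps N M px py Dx Dy U1 U2 sL sR sD sU w1 w2)
     = (-2 * ipP N M px py w1 (\<lambda>i j. U1 i j * dx N Dx w1 i j) + 2 * ipP N M px py w1 (Bx w1))
     + (-2 * ipP N M px py w1 (\<lambda>i j. U2 i j * dy M Dy w1 i j) + 2 * ipP N M px py w1 (By w1))
     + (-2 * ipP N M px py w2 (\<lambda>i j. U1 i j * dx N Dx w2 i j) + 2 * ipP N M px py w2 (Bx w2))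
     + (-2 * ipP N M px py w2 (\<lambda>i j. U2 i j * dy M Dy w2 i j) + 2 * ipP N M px py w2 (By w2))
     + 2 * (ipP N M px py w1 (\<lambda>i j. - dy M Dy U2 i j * w1 i j + dy M Dy U1 i j * w2 i j)
       + ipP N M px py w2 (\<lambda>i j. dx N Dx U2 i j * w1 i j - dx N Dx U1 i j * w2 i j))
     + 2 * eps * (ipP N M px py w1 E1 + ipP N M px py w2 E2)"
    unfolding r1 r2 by (simp only: ipP_add ipP_neg ipP_scale) (simp add: algebra_simps)
  show ?thesis unfolding lhs E using X[of w1] X[of w2] Y[of w1] Y[of w2] C
    by (simp add: algebra_simps)
qed



lemma funpow_deriv_x: "(deriv ^^ k) (\<lambda>x. u (x, y)) = (\<lambda>x. ipd (replicate k True) u (x, y))"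
  by (induction k) (simp_all add: pdx_def)

lemma funpow_deriv_y: "(deriv ^^ k) (\<lambda>y. u (x, y)) = (\<lambda>y. ipd (replicate k False) u (x, y))"
  by (induction k) (simp_all add: pdy_def)

lemma slice_x: assumes "smooth_sq u" "y \<in> {0..1}" shows "smooth01 (\<lambda>x. u (x, y))"
proof -
  obtain S where S: "open S" "{0..1} \<times> {0..1} \<subseteq> S" "smooth_on2 S u"
    using assms(1) unfolding smooth_sq_def by blast
  let ?S = "(\<lambda>x. (x, y)) -` S"
  have "open ?S" using S(1) by (intro continuous_open_vimage) (auto intro!: continuous_intros)
  moreover have "{0..1} \<subseteq> ?S" using S(2) assms(2) by (auto simp: subset_iff)
  moreover have "smooth_on1 ?S (\<lambda>x. u (x, y))"
    unfolding smooth_on1_def funpow_deriv_x using S(3) unfolding smooth_on2_def by auto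
  ultimately show ?thesis unfolding smooth01_def by blast
qed

lemma slice_y: assumes "smooth_sq u" "x \<in> {0..1}" shows "smooth01 (\<lambda>y. u (x, y))"
proof -
  obtain S where S: "open S" "{0..1} \<times> {0..1} \<subseteq> S" "smooth_on2 S u"
    using assms(1) unfolding smooth_sq_def by blast
  let ?S = "(\<lambda>y. (x, y)) -` S"
  have "open ?S" using S(1) by (intro continuous_open_vimage) (auto intro!: continuous_intros)
  moreover have "{0..1} \<subseteq> ?S" using S(2) assms(2) by (auto simp: subset_iff)
  moreover have "smooth_on1 ?S (\<lambda>y. u (x, y))"
    unfolding smooth_on1_def funpow_deriv_y using S(3) unfolding smooth_on2_def by auto
  ultimately show ?thesis unfolding smooth01_def by blast
qed

lemma ipd_bound: assumes "smooth_sq u"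
  shows "\<exists>B. \<forall>z\<in>{0..1} \<times> {0..1}. \<bar>ipd bs u z\<bar> \<le> B"
proof -
  obtain S where S: "open S" "{0..1} \<times> {0..1} \<subseteq> S" "smooth_on2 S u"
    using assms(1) unfolding smooth_sq_def by blast
  have "continuous_on ({0..1} \<times> {0..1}) (ipd bs u)"
    using S(2,3) unfolding smooth_on2_def by (meson continuous_on_subset)
  hence "compact (ipd bs u ` ({0..1::real} \<times> {0..1::real}))"
    by (intro compact_continuous_image compact_Times compact_Icc)
  hence "bounded (ipd bs u ` ({0..1::real} \<times> {0..1::real}))" by (rule compact_imp_bounded)
  thus ?thesis unfolding bounded_iff by auto
qed

lemma Linf_bound:
  assumes "\<forall>x\<in>{0..1}. \<bar>g x\<bar> \<le> B"
  shows "0 \<le> Linf01 g \<and> Linf01 g \<le> B"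
proof -
  have bdd: "bdd_above ((\<lambda>x. \<bar>g x\<bar>) ` {0..1})" using assms by (auto intro: bdd_aboveI2)
  have "\<bar>g 0\<bar> \<le> Linf01 g" unfolding Linf01_def by (rule cSup_upper[OF _ bdd]) auto
  moreover have "Linf01 g \<le> B" unfolding Linf01_def using assms by (intro cSup_least) auto
  ultimately show ?thesis by linarith
qed

lemma smooth_K:
  assumes "smooth_sq u1" "smooth_sq u2"
  shows "\<exists>K. (\<forall>y\<in>{0..1}. smooth01 (\<lambda>x. u1 (x, y)) \<and> C0 * Linf01 (deriv (\<lambda>x. u1 (x, y))) \<le> K)
           \<and> (\<forall>x\<in>{0..1}. smooth01 (\<lambda>y. u2 (x, y)) \<and> C0 * Linf01 (deriv (\<lambda>y. u2 (x, y))) \<le> K)"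
proof -
  obtain B1 where B1: "\<forall>z\<in>{0..1} \<times> {0..1}. \<bar>ipd [True] u1 z\<bar> \<le> B1" using ipd_bound[OF assms(1)] by blast
  obtain B2 where B2: "\<forall>z\<in>{0..1} \<times> {0..1}. \<bar>ipd [False] u2 z\<bar> \<le> B2" using ipd_bound[OF assms(2)] by blast
  define K where "K = \<bar>C0\<bar> * max B1 B2"
  have key: "\<And>L. 0 \<le> L \<Longrightarrow> L \<le> max B1 B2 \<Longrightarrow> C0 * L \<le> K"
  proof -
    fix L :: real assume "0 \<le> L" "L \<le> max B1 B2"
    hence "C0 * L \<le> \<bar>C0\<bar> * L" by (simp add: mult_right_mono)
    also have "\<dots> \<le> \<bar>C0\<bar> * max B1 B2" using \<open>L \<le> _\<close> by (simp add: mult_left_mono)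
    finally show "C0 * L \<le> K" unfolding K_def .
  qed
  have "\<forall>y\<in>{0..1}. smooth01 (\<lambda>x. u1 (x, y)) \<and> C0 * Linf01 (deriv (\<lambda>x. u1 (x, y))) \<le> K"
  proof
    fix y :: real assume y: "y \<in> {0..1}"
    have d: "deriv (\<lambda>x. u1 (x, y)) = (\<lambda>x. ipd [True] u1 (x, y))" by (simp add: pdx_def)
    have "\<forall>x\<in>{0..1}. \<bar>deriv (\<lambda>x. u1 (x, y)) x\<bar> \<le> max B1 B2" unfolding d using B1 y by force
    from Linf_bound[OF this] show "smooth01 (\<lambda>x. u1 (x, y)) \<and> C0 * Linf01 (deriv (\<lambda>x. u1 (x, y))) \<le> K"
      using slice_x[OF assms(1) y] key by blast
  qed
  moreover have "\<forall>x\<in>{0..1}. smooth01 (\<lambda>y. u2 (x, y)) \<and> C0 * Linf01 (deriv (\<lambda>y. u2 (x, y))) \<le> K"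
  proof
    fix x :: real assume x: "x \<in> {0..1}"
    have d: "deriv (\<lambda>y. u2 (x, y)) = (\<lambda>y. ipd [False] u2 (x, y))" by (simp add: pdy_def)
    have "\<forall>y\<in>{0..1}. \<bar>deriv (\<lambda>y. u2 (x, y)) y\<bar> \<le> max B1 B2" unfolding d using B2 x by force
    from Linf_bound[OF this] show "smooth01 (\<lambda>y. u2 (x, y)) \<and> C0 * Linf01 (deriv (\<lambda>y. u2 (x, y))) \<le> K"
      using slice_y[OF assms(2) x] key by blast
  qed
  ultimately show ?thesis by blast
qed



lemma gronwall:
  fixes n W :: "real \<Rightarrow> real" and t c eps :: real
  assumes t: "0 \<le> t" and eps: "0 \<le> eps"
    and cn: "continuous_on {0..t} n" and cW: "continuous_on {0..t} W"
    and W0: "\<forall>s\<in>{0..t}. 0 \<le> W s"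
    and D: "\<forall>s. 0 < s \<longrightarrow> s < t \<longrightarrow> (\<exists>n'. (n has_real_derivative n') (at s) \<and> n' \<le> c * n s - 2 * eps * W s)"
  shows "n t + eps * integral {0..t} (\<lambda>s. exp (c * (t - s)) * W s) \<le> exp (c * t) * n 0"
proof -
  define h where "h = (\<lambda>r. exp (- c * r) * W r)"
  have ch: "continuous_on {0..t} h" unfolding h_def by (intro continuous_intros cW)
  define g where "g = (\<lambda>s. exp (- c * s) * n s + 2 * eps * integral {0..s} h)"
  have Ih: "\<And>s. s \<in> {0..t} \<Longrightarrow> ((\<lambda>x. integral {0..x} h) has_real_derivative h s) (at s within {0..t})"
    by (rule integral_has_real_derivative[OF ch])
  have cI: "continuous_on {0..t} (\<lambda>x. integral {0..x} h)"
    by (rule DERIV_continuous_on[OF Ih])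
  have cg: "continuous_on {0..t} g" unfolding g_def by (intro continuous_intros cn cI)
  have dg: "\<exists>y. (g has_real_derivative y) (at s) \<and> y \<le> 0" if s: "0 < s" "s < t" for s
  proof -
    have "\<exists>n'. (n has_real_derivative n') (at s) \<and> n' \<le> c * n s - 2 * eps * W s"
      using D s(1) s(2) by simp
    then obtain n' where n': "(n has_real_derivative n') (at s)" "n' \<le> c * n s - 2 * eps * W s"
      by (elim exE conjE)
    have "((\<lambda>x. integral {0..x} h) has_real_derivative h s) (at s)"
    proof -
      have "at s within {0..t} = at s" by (rule at_within_interior) (use s in simp)
      thus ?thesis using Ih[of s] s by simp
    qed
    note I = this
    have e: "((\<lambda>s. exp (- c * s)) has_real_derivative exp (- c * s) * (- c)) (at s)"
      using DERIV_exp[THEN DERIV_chain2, OF DERIV_cmult[OF DERIV_ident, of "- c"]] by simp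
    have "(g has_real_derivative (exp (- c * s) * n' + exp (- c * s) * (- c) * n s + 2 * eps * h s)) (at s)"
      unfolding g_def by (rule DERIV_add[OF DERIV_mult'[OF e n'(1)] DERIV_cmult[OF I]])
    moreover have "exp (- c * s) * n' + exp (- c * s) * (- c) * n s + 2 * eps * h s
        = exp (- c * s) * (n' - (c * n s - 2 * eps * W s))"
      unfolding h_def by (simp add: algebra_simps)
    moreover have "exp (- c * s) * (n' - (c * n s - 2 * eps * W s)) \<le> 0"
      using n'(2) by (simp add: mult_nonneg_nonpos)
    ultimately show ?thesis by auto
  qed
  have "g t \<le> g 0" by (rule DERIV_nonpos_imp_decreasing_open[OF t dg cg])
  hence g: "exp (- c * t) * n t + 2 * eps * integral {0..t} h \<le> n 0" unfolding g_def by simp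
  have hi: "h integrable_on {0..t}" by (rule integrable_continuous_interval[OF ch])
  have I0: "0 \<le> integral {0..t} h" using W0 unfolding h_def
    by (intro integral_nonneg[OF hi[unfolded h_def]]) auto
  have J: "integral {0..t} (\<lambda>s. exp (c * (t - s)) * W s) = exp (c * t) * integral {0..t} h"
  proof -
    have "(\<lambda>s. exp (c * (t - s)) * W s) = (\<lambda>s. exp (c * t) * h s)"
      unfolding h_def by (auto simp: fun_eq_iff right_diff_distrib exp_diff exp_minus field_simps)
    thus ?thesis using integral_mult[OF hi, of "exp (c * t)"] by simp
  qed
  have A: "exp (c * t) * (exp (- c * t) * n t + 2 * eps * integral {0..t} h) \<le> exp (c * t) * n 0"
    using g by (simp add: mult_left_mono)
  have B: "exp (c * t) * (exp (- c * t) * n t + 2 * eps * integral {0..t} h)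
     = (exp (c * t) * exp (- c * t)) * n t + 2 * eps * (exp (c * t) * integral {0..t} h)"
    by (simp only: distrib_left mult.assoc mult.left_commute)
  have C: "exp (c * t) * exp (- c * t) = 1" by (simp add: exp_add[symmetric])
  have "n t + 2 * eps * (exp (c * t) * integral {0..t} h) \<le> exp (c * t) * n 0"
    using A unfolding B C by simp
  moreover have "eps * (exp (c * t) * integral {0..t} h) \<le> 2 * eps * (exp (c * t) * integral {0..t} h)"
    using eps I0 by (simp add: mult_right_mono)
  ultimately show ?thesis unfolding J by linarith
qed



lemma cont_ipP:
  assumes "\<forall>i<N. \<forall>j<M. continuous_on T (\<lambda>s. A s i j) \<and> continuous_on T (\<lambda>s. B s i j)"
  shows "continuous_on T (\<lambda>s. ipP N M px py (A s) (B s))"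
  unfolding ipP_def using assms by (intro continuous_intros) auto

lemma cont_curl:
  assumes "\<forall>i<N. \<forall>j<M. continuous_on T (\<lambda>s. V1 s i j) \<and> continuous_on T (\<lambda>s. V2 s i j)"
  shows "\<forall>i<N. \<forall>j<M. continuous_on T (\<lambda>s. curlg N M Dx Dy (V1 s) (V2 s) i j)"
  unfolding curlg_def dx_def dy_def using assms by (auto intro!: continuous_intros)

lemma ipP_deriv:
  assumes "\<forall>i<N. \<forall>j<M. ((\<lambda>s. V s i j) has_real_derivative R i j) (at s0)"
  shows "((\<lambda>s. ipP N M px py (V s) (V s)) has_real_derivative 2 * ipP N M px py (V s0) R) (at s0)"
proof -
  have "((\<lambda>s. \<Sum>i<N. \<Sum>j<M. px i * py j * V s i j * V s i j) has_real_derivative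
        (\<Sum>i<N. \<Sum>j<M. px i * py j * 2 * (V s0 i j * R i j))) (at s0)"
  proof (intro DERIV_sum)
    fix i j assume "i \<in> {..<N}" "j \<in> {..<M}"
    hence d: "((\<lambda>s. V s i j) has_real_derivative R i j) (at s0)" using assms by auto
    have "((\<lambda>s. (px i * py j) * (V s i j * V s i j)) has_real_derivative
         (px i * py j) * (V s0 i j * R i j + R i j * V s0 i j)) (at s0)"
      by (rule DERIV_cmult[OF DERIV_mult'[OF d d]])
    thus "((\<lambda>s. px i * py j * V s i j * V s i j) has_real_derivative px i * py j * 2 * (V s0 i j * R i j)) (at s0)"
      by (simp add: algebra_simps)
  qed
  moreover have "(\<Sum>i<N. \<Sum>j<M. px i * py j * 2 * (V s0 i j * R i j)) = 2 * ipP N M px py (V s0) R"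
    unfolding ipP_def by (simp add: sum_distrib_left algebra_simps)
  ultimately show ?thesis unfolding ipP_def by simp
qed



theorem theorem3p5:
  fixes u1 u2 :: "real \<times> real \<Rightarrow> real" and C0 :: real
  assumes "smooth_sq u1" and "smooth_sq u2"
  shows "\<exists>F :: real \<Rightarrow> real. \<forall>eps N M p Qx q Qy sL sR sD sU V1 V2 t.
    (let px = Pdiag N p; py = Pdiag M q; Dx = Dop px Qx; Dy = Dop py Qy;
         U1 = ug N M u1; U2 = ug N M u2; c = F (dmax N M Dx Dy U1 U2);
         nrm = (\<lambda>s. ipP N M px py (V1 s) (V1 s) + ipP N M px py (V2 s) (V2 s));
         crl = (\<lambda>s. curlg N M Dx Dy (V1 s) (V2 s))
     in 0 < eps \<longrightarrow> SBP N p Qx \<longrightarrow> SBP M q Qy \<longrightarrow>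
        commutator_bound N p Qx C0 \<longrightarrow> commutator_bound M q Qy C0 \<longrightarrow>
        penalty_ok N M u1 u2 sL sR sD sU \<longrightarrow>
        solves eps N M px py Dx Dy U1 U2 sL sR sD sU V1 V2 \<longrightarrow> 0 \<le> t \<longrightarrow>
        nrm t + eps * integral {0..t} (\<lambda>s. exp (c * (t - s)) * ipP N M px py (crl s) (crl s))
          \<le> exp (c * t) * nrm 0)"
proof -
  obtain K where KK: "(\<forall>y\<in>{0..1}. smooth01 (\<lambda>x. u1 (x, y)) \<and> C0 * Linf01 (deriv (\<lambda>x. u1 (x, y))) \<le> K)
           \<and> (\<forall>x\<in>{0..1}. smooth01 (\<lambda>y. u2 (x, y)) \<and> C0 * Linf01 (deriv (\<lambda>y. u2 (x, y))) \<le> K)"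
    using smooth_K[OF assms, of C0] by blast
  show ?thesis
  proof (rule exI[where x = "\<lambda>d. 2 * K + 4 * d"], intro allI, unfold Let_def, intro impI)
    fix eps N M p Qx q Qy sL sR sD sU V1 V2 and t :: real
    let ?px = "Pdiag N p" and ?py = "Pdiag M q"
    let ?Dx = "Dop ?px Qx" and ?Dy = "Dop ?py Qy"
    let ?U1 = "ug N M u1" and ?U2 = "ug N M u2"
    let ?c = "2 * K + 4 * dmax N M ?Dx ?Dy ?U1 ?U2"
    assume eps: "0 < eps" and Sx: "SBP N p Qx" and Sy: "SBP M q Qy"
      and CBx: "commutator_bound N p Qx C0" and CBy: "commutator_bound M q Qy C0"
      and pen: "penalty_ok N M u1 u2 sL sR sD sU"
      and sol: "solves eps N M ?px ?py ?Dx ?Dy ?U1 ?U2 sL sR sD sU V1 V2" and t: "0 \<le> t"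
    have px0: "\<forall>i<N. 0 \<le> ?px i" using SBP_pos[OF Sx] by (simp add: less_imp_le)
    have py0: "\<forall>j<M. 0 \<le> ?py j" using SBP_pos[OF Sy] by (simp add: less_imp_le)
    have cV: "\<forall>i<N. \<forall>j<M. continuous_on {0..t} (\<lambda>s. V1 s i j) \<and> continuous_on {0..t} (\<lambda>s. V2 s i j)"
    proof -
      have sub: "{0..t} \<subseteq> {0::real..}" by auto
      show ?thesis using sol unfolding solves_def by (meson continuous_on_subset[OF _ sub])
    qed
    show "ipP N M ?px ?py (V1 t) (V1 t) + ipP N M ?px ?py (V2 t) (V2 t)
        + eps * integral {0..t} (\<lambda>s. exp (?c * (t - s)) * ipP N M ?px ?py (curlg N M ?Dx ?Dy (V1 s) (V2 s)) (curlg N M ?Dx ?Dy (V1 s) (V2 s)))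
        \<le> exp (?c * t) * (ipP N M ?px ?py (V1 0) (V1 0) + ipP N M ?px ?py (V2 0) (V2 0))"
    proof (rule gronwall[where n = "\<lambda>s. ipP N M ?px ?py (V1 s) (V1 s) + ipP N M ?px ?py (V2 s) (V2 s)"
                          and W = "\<lambda>s. ipP N M ?px ?py (curlg N M ?Dx ?Dy (V1 s) (V2 s)) (curlg N M ?Dx ?Dy (V1 s) (V2 s))"])
      show "0 \<le> t" by (rule t)
      show "0 \<le> eps" using eps by simp
      show "continuous_on {0..t} (\<lambda>s. ipP N M ?px ?py (V1 s) (V1 s) + ipP N M ?px ?py (V2 s) (V2 s))"
        using cV by (intro continuous_on_add cont_ipP) auto
      show "continuous_on {0..t} (\<lambda>s. ipP N M ?px ?py (curlg N M ?Dx ?Dy (V1 s) (V2 s)) (curlg N M ?Dx ?Dy (V1 s) (V2 s)))"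
        using cont_curl[OF cV] by (intro cont_ipP) auto
      show "\<forall>s\<in>{0..t}. 0 \<le> ipP N M ?px ?py (curlg N M ?Dx ?Dy (V1 s) (V2 s)) (curlg N M ?Dx ?Dy (V1 s) (V2 s))"
        using ipP_nonneg[OF px0 py0] by blast
      show "\<forall>s. 0 < s \<longrightarrow> s < t \<longrightarrow> (\<exists>n'. ((\<lambda>s. ipP N M ?px ?py (V1 s) (V1 s) + ipP N M ?px ?py (V2 s) (V2 s)) has_real_derivative n') (at s)
          \<and> n' \<le> ?c * (ipP N M ?px ?py (V1 s) (V1 s) + ipP N M ?px ?py (V2 s) (V2 s))
                 - 2 * eps * ipP N M ?px ?py (curlg N M ?Dx ?Dy (V1 s) (V2 s)) (curlg N M ?Dx ?Dy (V1 s) (V2 s)))"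
      proof (intro allI impI)
        fix s :: real assume s: "0 < s" "s < t"
        let ?R1 = "rhs1 eps N M ?px ?py ?Dx ?Dy ?U1 ?U2 sL sR sD sU (V1 s) (V2 s)"
        let ?R2 = "rhs2 eps N M ?px ?py ?Dx ?Dy ?U1 ?U2 sL sR sD sU (V1 s) (V2 s)"
        have d1: "\<forall>i<N. \<forall>j<M. ((\<lambda>s. V1 s i j) has_real_derivative ?R1 i j) (at s)"
          using sol s unfolding solves_def by blast
        have d2: "\<forall>i<N. \<forall>j<M. ((\<lambda>s. V2 s i j) has_real_derivative ?R2 i j) (at s)"
          using sol s unfolding solves_def by blast
        have D: "((\<lambda>s. ipP N M ?px ?py (V1 s) (V1 s) + ipP N M ?px ?py (V2 s) (V2 s)) has_real_derivative
             2 * ipP N M ?px ?py (V1 s) ?R1 + 2 * ipP N M ?px ?py (V2 s) ?R2) (at s)"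
          by (rule DERIV_add[OF ipP_deriv[OF d1] ipP_deriv[OF d2]])
        have E: "2 * ipP N M ?px ?py (V1 s) ?R1 + 2 * ipP N M ?px ?py (V2 s) ?R2
            \<le> ?c * (ipP N M ?px ?py (V1 s) (V1 s) + ipP N M ?px ?py (V2 s) (V2 s))
                 - 2 * eps * ipP N M ?px ?py (curlg N M ?Dx ?Dy (V1 s) (V2 s)) (curlg N M ?Dx ?Dy (V1 s) (V2 s))"
          by (rule energy[OF Sx Sy CBx CBy conjunct1[OF KK] conjunct2[OF KK] pen])
        show "\<exists>n'. ((\<lambda>s. ipP N M ?px ?py (V1 s) (V1 s) + ipP N M ?px ?py (V2 s) (V2 s)) has_real_derivative n') (at s)
          \<and> n' \<le> ?c * (ipP N M ?px ?py (V1 s) (V1 s) + ipP N M ?px ?py (V2 s) (V2 s))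
                 - 2 * eps * ipP N M ?px ?py (curlg N M ?Dx ?Dy (V1 s) (V2 s)) (curlg N M ?Dx ?Dy (V1 s) (V2 s))"
          using D E by blast
      qed
    qed
  qed
qed


end
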